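(* Let $k$ be a non-negative integer, $a_0,\dots,a_k\in\mathbb{C}$, and $\Lambda=\sum_{i=0}^{k}a_i(Dx)^iD$ acting on $\mathcal{P}$. (i) For any positive integer $k$, $\Lambda=0$ if and only if $a_i=0$ for $i=0,\dots,k$. (ii) Suppose $a_k\neq0$. Then $\Lambda$ is a lowering operator if and only if the polynomial $f(x)=\sum_{i=0}^{k}a_ix^i$ has no positive integer root.
   Context: $\mathcal{P}$ is the space of complex polynomials in $x$; $D$ is the derivative, $x$ is multiplication by $x$, and products of operators are compositions. A lowering operator is a linear map $\mathcal{O}:\mathcal{P}\to\mathcal{P}$ with $\mathcal{O}(1)=0$ and $\deg(\mathcal{O}(x^n))=n-1$ for all $n\ge1$. *)

theory Defs
  imports "HOL-Computational_Algebra.Polynomial"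
begin

definition Dop :: "complex poly \<Rightarrow> complex poly" where
  "Dop p = pderiv p"

definition Xop :: "complex poly \<Rightarrow> complex poly" where
  "Xop p = [:0, 1:] * p"

definition Lam :: "nat \<Rightarrow> (nat \<Rightarrow> complex) \<Rightarrow> complex poly \<Rightarrow> complex poly" where
  "Lam k a p = (\<Sum>i\<le>k. smult (a i) (((Dop \<circ> Xop) ^^ i) (Dop p)))"

definition lowering_op :: "(complex poly \<Rightarrow> complex poly) \<Rightarrow> bool" where
  "lowering_op T \<longleftrightarrow>
     (\<forall>p q. T (p + q) = T p + T q) \<and>
     (\<forall>c p. T (smult c p) = smult c (T p)) \<and>
     T 1 = 0 \<and>
     (\<forall>n\<ge>1. T (monom 1 n) \<noteq> 0 \<and> degree (T (monom 1 n)) = n - 1)"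

end

theory Submission
  imports Defs
begin

abbreviation "DX \<equiv> Dop \<circ> Xop"

lemma Xop_monom: "Xop (monom c m) = monom c (Suc m)"
  unfolding Xop_def by (simp add: monom_Suc)

lemma Dop_monom: "Dop (monom c n) = monom (of_nat n * c) (n - 1)"
  by (simp add: Dop_def pderiv_monom)

lemma DX_monom: "Dop (Xop (monom c m)) = monom (c * of_nat (Suc m)) m"
  by (simp add: Xop_monom Dop_monom mult.commute)

lemma DX_iter_monom: "(DX ^^ i) (monom c m) = monom (c * of_nat (Suc m) ^ i) m"
  by (induction i) (simp_all only: funpow.simps comp_apply id_apply DX_monom mult.assoc power_Suc mult.commute mult.left_commute, simp)

lemma Xop_add: "Xop (p + q) = Xop p + Xop q" by (simp add: Xop_def distrib_left)
lemma Dop_add: "Dop (p + q) = Dop p + Dop q" by (simp add: Dop_def pderiv_add)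
lemma Xop_smult: "Xop (smult c p) = smult c (Xop p)" by (simp add: Xop_def)
lemma Dop_smult: "Dop (smult c p) = smult c (Dop p)" by (simp add: Dop_def pderiv_smult)

lemma DX_iter_add: "(DX ^^ i) (p + q) = (DX ^^ i) p + (DX ^^ i) q"
  by (induction i) (simp_all add: Xop_add Dop_add)

lemma DX_iter_smult: "(DX ^^ i) (smult c p) = smult c ((DX ^^ i) p)"
  by (induction i) (simp_all add: Xop_smult Dop_smult)

lemma smult_sum2: "smult c (\<Sum>i\<in>S. f i) = (\<Sum>i\<in>S. smult c (f i))"
  by (induction S rule: infinite_finite_induct) (simp_all add: smult_add_right)

lemma Lam_add: "Lam k a (p + q) = Lam k a p + Lam k a q"
  unfolding Lam_def by (simp add: Dop_add DX_iter_add sum.distrib smult_add_right)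

lemma Lam_smult: "Lam k a (smult c p) = smult c (Lam k a p)"
  unfolding Lam_def by (simp add: Dop_smult DX_iter_smult smult_sum2 mult.commute)

lemma Lam_one: "Lam k a 1 = 0"
proof -
  have "Dop 1 = 0" by (simp add: Dop_def)
  moreover have "(DX ^^ i) 0 = 0" for i
    using DX_iter_smult[of i 0 0] by simp
  ultimately show ?thesis unfolding Lam_def by simp
qed

lemma poly_f: fixes a :: "nat \<Rightarrow> complex" shows "poly (\<Sum>i\<le>k. monom (a i) i) x = (\<Sum>i\<le>k. a i * x ^ i)"
  unfolding poly_sum by (rule sum.cong) (simp_all add: poly_monom)

lemma Lam_monom:
  assumes "n \<ge> 1"
  shows "Lam k a (monom 1 n) = monom (of_nat n * poly (\<Sum>i\<le>k. monom (a i) i) (of_nat n)) (n - 1)"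
proof -
  have d: "Dop (monom 1 n) = monom (of_nat n) (n - 1)"
    by (simp add: Dop_def pderiv_monom)
  have s: "Suc (n - 1) = n" using assms by simp
  have "Lam k a (monom 1 n) = (\<Sum>i\<le>k. monom (a i * (of_nat n * of_nat n ^ i)) (n - 1))"
    unfolding Lam_def d DX_iter_monom s by (simp add: smult_monom)
  also have "\<dots> = monom (\<Sum>i\<le>k. a i * (of_nat n * of_nat n ^ i)) (n - 1)"
    by (simp add: monom_sum)
  finally show ?thesis unfolding poly_f
    by (simp add: sum_distrib_left algebra_simps)
qed

lemma DX_zero: "(DX ^^ i) 0 = 0"
  using DX_iter_smult[of i 0 0] by simp

theorem proposition2:
  fixes k :: nat and a :: "nat \<Rightarrow> complex"
  shows "(0 < k \<longrightarrow> (Lam k a = (\<lambda>p. 0) \<longleftrightarrow> (\<forall>i\<le>k. a i = 0)))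
       \<and> (a k \<noteq> 0 \<longrightarrow>
            (lowering_op (Lam k a) \<longleftrightarrow>
             \<not> (\<exists>n::nat. 0 < n \<and> poly (\<Sum>i\<le>k. monom (a i) i) (of_nat n) = 0)))"
proof (intro conjI impI)
  define f where "f = (\<Sum>i\<le>k. monom (a i) i)"
  show "Lam k a = (\<lambda>p. 0) \<longleftrightarrow> (\<forall>i\<le>k. a i = 0)"
  proof
    assume L: "Lam k a = (\<lambda>p. 0)"
    have r: "poly f (of_nat n) = 0" if "n \<ge> 1" for n
    proof -
      have "monom (of_nat n * poly f (of_nat n)) (n - 1) = 0"
        using Lam_monom[OF that, of k a] L unfolding f_def by simp
      thus ?thesis using that by simp
    qed
    have "f = 0"
    proof (rule ccontr)
      assume "f \<noteq> 0"
      hence fin: "finite {x. poly f x = 0}" by (rule poly_roots_finite)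
      have "(of_nat :: nat \<Rightarrow> complex) ` {1..} \<subseteq> {x. poly f x = 0}" using r by auto
      hence "finite ((of_nat :: nat \<Rightarrow> complex) ` {1..})" using fin finite_subset by blast
      hence "finite ({1..} :: nat set)"
        using finite_imageD inj_of_nat by (metis inj_on_subset subset_UNIV)
      thus False using infinite_Ici by blast
    qed
    thus "\<forall>i\<le>k. a i = 0"
      using coeff_sum_monom[of _ k a] unfolding f_def by (metis coeff_0)
  next
    assume "\<forall>i\<le>k. a i = 0"
    thus "Lam k a = (\<lambda>p. 0)" unfolding Lam_def by (auto intro!: ext sum.neutral)
  qed
next
  show "lowering_op (Lam k a) \<longleftrightarrow>
             \<not> (\<exists>n::nat. 0 < n \<and> poly (\<Sum>i\<le>k. monom (a i) i) (of_nat n) = 0)"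
  proof -
    define f where "f = (\<Sum>i\<le>k. monom (a i) i)"
    have m: "Lam k a (monom 1 n) \<noteq> 0 \<and> degree (Lam k a (monom 1 n)) = n - 1
             \<longleftrightarrow> poly f (of_nat n) \<noteq> 0" if "n \<ge> 1" for n
      using Lam_monom[OF that, of k a] that unfolding f_def[symmetric]
      by (cases "poly f (of_nat n) = 0") (simp_all add: degree_monom_eq)
    have "lowering_op (Lam k a) \<longleftrightarrow> (\<forall>n\<ge>1. poly f (of_nat n) \<noteq> 0)"
      unfolding lowering_op_def using Lam_add Lam_smult Lam_one m by simp
    also have "\<dots> \<longleftrightarrow> \<not> (\<exists>n::nat. 0 < n \<and> poly f (of_nat n) = 0)"
      by (metis One_nat_def Suc_le_eq)
    finally show ?thesis unfolding f_def .
  qed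
qed

end
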